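(* If $n\ge1$, $m>0$ and $(n,m)\neq(1,1)$, then $|A_{n,m}|=4n$.
   Context: The Yoke graph $Y_{n,m}$ has vertices the tuples $v=(v_0,\dots,v_{m+1})$ with $v_0,v_{m+1}\in\mathbb{Z}_n$, $v_1,\dots,v_m\in\{0,1\}$, $\sum v_i\equiv0\pmod n$; $u\sim v$ iff there is $0\le i\le m$ with $u_j=v_j$ for $j\notin\{i,i+1\}$ and either ($u_i=v_i+1$, $u_{i+1}=v_{i+1}-1$) or ($u_i=v_i-1$, $u_{i+1}=v_{i+1}+1$), buckets mod $n$. Define automorphisms (bucket entries mod $n$): $\varphi(v_0,v_1,\dots,v_m,v_{m+1})=(v_0+1,v_1,\dots,v_m,v_{m+1}-1)$; $\psi(v_0,\dots,v_{m+1})=(v_{m+1},v_m,\dots,v_1,v_0)$; $\tau(v_0,v_1,\dots,v_m,v_{m+1})=(-v_0,1-v_1,\dots,1-v_m,-(m+v_{m+1}))$. $A_{n,m}$ is the subgroup of $\operatorname{Aut}(Y_{n,m})$ generated by $\varphi,\psi,\tau$. *)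

theory Defs
  imports "HOL-Algebra.Bij" "HOL-Algebra.Generated_Groups"
begin

text \<open>Vertices of the Yoke graph Y(n,m): integer lists v = [v_0, ..., v_(m+1)]
  of length m+2; the buckets v_0 and v_(m+1) are residues mod n represented by
  their canonical representatives in {0..<n}; the middle entries are bits.\<close>

definition yoke_V :: "nat \<Rightarrow> nat \<Rightarrow> int list set" where
  "yoke_V n m = {v. length v = m + 2
      \<and> v ! 0 \<in> {0..<int n} \<and> v ! (m+1) \<in> {0..<int n}
      \<and> (\<forall>i\<in>{1..m}. v ! i \<in> {0, 1})
      \<and> sum_list v mod int n = 0}"

definition yoke_entry_eq :: "nat \<Rightarrow> nat \<Rightarrow> nat \<Rightarrow> int \<Rightarrow> int \<Rightarrow> bool" where
  "yoke_entry_eq n m i a b = (if i = 0 \<or> i = m + 1 then a mod int n = b mod int n else a = b)"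

definition yoke_adj :: "nat \<Rightarrow> nat \<Rightarrow> int list \<Rightarrow> int list \<Rightarrow> bool" where
  "yoke_adj n m u v = (u \<in> yoke_V n m \<and> v \<in> yoke_V n m \<and>
     (\<exists>i\<le>m. (\<forall>j<m+2. j \<noteq> i \<and> j \<noteq> i + 1 \<longrightarrow> u ! j = v ! j) \<and>
        ((yoke_entry_eq n m i (u ! i) (v ! i + 1) \<and>
          yoke_entry_eq n m (i+1) (u ! (i+1)) (v ! (i+1) - 1)) \<or>
         (yoke_entry_eq n m i (u ! i) (v ! i - 1) \<and>
          yoke_entry_eq n m (i+1) (u ! (i+1)) (v ! (i+1) + 1)))))"

definition yoke_aut :: "nat \<Rightarrow> nat \<Rightarrow> (int list \<Rightarrow> int list) set" where
  "yoke_aut n m = {f \<in> Bij (yoke_V n m).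
      \<forall>u\<in>yoke_V n m. \<forall>v\<in>yoke_V n m. yoke_adj n m (f u) (f v) = yoke_adj n m u v}"

definition AutYoke :: "nat \<Rightarrow> nat \<Rightarrow> (int list \<Rightarrow> int list) monoid" where
  "AutYoke n m = (BijGroup (yoke_V n m)) \<lparr>carrier := yoke_aut n m\<rparr>"

text \<open>The three maps phi, psi, tau (bucket entries reduced mod n), restricted to
  the vertex set so that they are elements of the permutation group.\<close>
definition yoke_phi :: "nat \<Rightarrow> nat \<Rightarrow> int list \<Rightarrow> int list" where
  "yoke_phi n m = (\<lambda>v \<in> yoke_V n m.
      v[0 := (v ! 0 + 1) mod int n, m + 1 := (v ! (m+1) - 1) mod int n])"

definition yoke_psi :: "nat \<Rightarrow> nat \<Rightarrow> int list \<Rightarrow> int list" where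
  "yoke_psi n m = (\<lambda>v \<in> yoke_V n m. rev v)"

definition yoke_tau :: "nat \<Rightarrow> nat \<Rightarrow> int list \<Rightarrow> int list" where
  "yoke_tau n m = (\<lambda>v \<in> yoke_V n m.
      map (\<lambda>i. if i = 0 then (- (v ! 0)) mod int n
               else if i = m + 1 then (- (int m + v ! (m+1))) mod int n
               else 1 - v ! i) [0..<m+2])"

definition A_yoke :: "nat \<Rightarrow> nat \<Rightarrow> (int list \<Rightarrow> int list) set" where
  "A_yoke n m = generate (AutYoke n m) {yoke_phi n m, yoke_psi n m, yoke_tau n m}"

end

theory Submission imports Defs "HOL-Number_Theory.Cong" begin

lemma sum_split_ends:
  fixes f :: "nat \<Rightarrow> int"
  shows "(\<Sum>i=0..<m+2. f i) = f 0 + f (m+1) + (\<Sum>i=1..m. f i)"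
proof -
  have "(\<Sum>i=0..<m+2. f i) = (\<Sum>i=0..<Suc m. f i) + f (m+1)" by simp
  also have "(\<Sum>i=0..<Suc m. f i) = f 0 + (\<Sum>i=Suc 0..<Suc m. f i)"
    by (subst sum.atLeast_Suc_lessThan) auto
  also have "{Suc 0..<Suc m} = {1..m}" by auto
  finally show ?thesis by simp
qed

lemma sum_list_ends:
  fixes v :: "int list"
  assumes "length v = m+2"
  shows "sum_list v = v!0 + v!(m+1) + (\<Sum>i=1..m. v!i)"
  using sum_split_ends[of "\<lambda>i. v!i" m] assms by (simp add: sum_list_sum_nth)

definition Pk :: "nat \<Rightarrow> nat \<Rightarrow> int \<Rightarrow> int list \<Rightarrow> int list" where
  "Pk n m k v = v[0 := (v ! 0 + k) mod int n, m + 1 := (v ! (m+1) - k) mod int n]"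

definition Tm :: "nat \<Rightarrow> nat \<Rightarrow> int list \<Rightarrow> int list" where
  "Tm n m v = map (\<lambda>i. if i = 0 then (- (v ! 0)) mod int n
               else if i = m + 1 then (- (int m + v ! (m+1))) mod int n
               else 1 - v ! i) [0..<m+2]"

definition Wrc :: "nat \<Rightarrow> nat \<Rightarrow> bool \<Rightarrow> bool \<Rightarrow> int list \<Rightarrow> int list" where
  "Wrc n m r c v = (if r then rev else id) ((if c then Tm n m else id) v)"

definition Gf :: "nat \<Rightarrow> nat \<Rightarrow> int \<Rightarrow> bool \<Rightarrow> bool \<Rightarrow> int list \<Rightarrow> int list" where
  "Gf n m k r c = (\<lambda>v \<in> yoke_V n m. Pk n m k (Wrc n m r c v))"

lemma V_len: "v \<in> yoke_V n m \<Longrightarrow> length v = m + 2"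
  by (simp add: yoke_V_def)

lemma V_b0: "v \<in> yoke_V n m \<Longrightarrow> 0 \<le> v!0 \<and> v!0 < int n"
  by (simp add: yoke_V_def)

lemma V_b1: "v \<in> yoke_V n m \<Longrightarrow> 0 \<le> v!(m+1) \<and> v!(m+1) < int n"
  by (simp add: yoke_V_def)

lemma V_bit: "v \<in> yoke_V n m \<Longrightarrow> 1 \<le> i \<Longrightarrow> i \<le> m \<Longrightarrow> v!i = 0 \<or> v!i = 1"
  by (auto simp add: yoke_V_def)

lemma V_sum: "v \<in> yoke_V n m \<Longrightarrow> sum_list v mod int n = 0"
  by (simp add: yoke_V_def)

lemma Pk_len[simp]: "length (Pk n m k v) = length v"
  by (simp add: Pk_def)

lemma Pk_nth: "length v = m + 2 \<Longrightarrow> j < m + 2 \<Longrightarrow> Pk n m k v ! j =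
   (if j = 0 then (v!0 + k) mod int n else if j = m+1 then (v!(m+1) - k) mod int n else v!j)"
  by (auto simp add: Pk_def nth_list_update)

lemma Tm_len[simp]: "length (Tm n m v) = m + 2"
  by (simp add: Tm_def)

lemma Tm_nth: "j < m + 2 \<Longrightarrow> Tm n m v ! j =
   (if j = 0 then (- (v ! 0)) mod int n
               else if j = m + 1 then (- (int m + v ! (m+1))) mod int n
               else 1 - v ! j)"
  by (simp add: Tm_def del: upt_Suc)

lemma rev_nth': "length v = m + 2 \<Longrightarrow> j < m + 2 \<Longrightarrow> rev v ! j = v ! (m + 1 - j)"
  by (simp add: rev_nth)

lemma modsum_aux: "((a::int) + b mod n + c mod n) mod n = (a + b + c) mod n"
  by (metis add.assoc mod_add_eq mod_add_right_eq mod_mod_trivial)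

lemma Pk_V:
  assumes n1: "n \<ge> 1" and v: "v \<in> yoke_V n m"
  shows "Pk n m k v \<in> yoke_V n m"
proof -
  have l: "length v = m+2" using v V_len by auto
  have lp: "length (Pk n m k v) = m + 2" using l by simp
  have s: "sum_list (Pk n m k v) = (v!0 + k) mod int n + (v!(m+1) - k) mod int n + (\<Sum>i=1..m. v!i)"
    using sum_list_ends[OF lp] l by (simp add: Pk_nth)
  have s2: "sum_list v = v!0 + v!(m+1) + (\<Sum>i=1..m. v!i)" using sum_list_ends[OF l] .
  have "sum_list (Pk n m k v) mod int n = ((\<Sum>i=1..m. v!i) + (v!0 + k) mod int n + (v!(m+1) - k) mod int n) mod int n"
    using s by (simp add: algebra_simps)
  also have "\<dots> = ((\<Sum>i=1..m. v!i) + (v!0 + k) + (v!(m+1) - k)) mod int n"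
    by (rule modsum_aux)
  also have "\<dots> = sum_list v mod int n" using s2 by (simp add: algebra_simps)
  finally have "sum_list (Pk n m k v) mod int n = 0" using V_sum[OF v] by simp
  moreover have "\<forall>i\<in>{1..m}. Pk n m k v ! i \<in> {0,1}" using V_bit[OF v] l by (auto simp: Pk_nth)
  ultimately show ?thesis using lp l n1 by (simp add: yoke_V_def Pk_nth)
qed

lemma rev_V:
  assumes v: "v \<in> yoke_V n m"
  shows "rev v \<in> yoke_V n m"
proof -
  have l: "length v = m+2" using v V_len by auto
  have "\<forall>i\<in>{1..m}. rev v ! i \<in> {0,1}"
  proof
    fix i assume "i \<in> {1..m}"
    then show "rev v ! i \<in> {0,1}" using V_bit[OF v, of "m+1-i"] l by (auto simp: rev_nth')
  qed
  then show ?thesis using v l by (simp add: yoke_V_def rev_nth' sum_list_rev)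
qed

lemma Tm_V:
  assumes n1: "n \<ge> 1" and v: "v \<in> yoke_V n m"
  shows "Tm n m v \<in> yoke_V n m"
proof -
  have l: "length v = m+2" using v V_len by auto
  have s: "sum_list (Tm n m v) = (- (v ! 0)) mod int n + (- (int m + v ! (m+1))) mod int n + (\<Sum>i=1..m. 1 - v!i)"
    using sum_list_ends[of "Tm n m v" m] by (simp add: Tm_nth)
  have s1: "(\<Sum>i=1..m. 1 - v!i) = int m - (\<Sum>i=1..m. v!i)"
    by (simp add: sum_subtractf)
  have s2: "sum_list v = v!0 + v!(m+1) + (\<Sum>i=1..m. v!i)" using sum_list_ends[OF l] .
  have "sum_list (Tm n m v) mod int n = ((int m - (\<Sum>i=1..m. v!i)) + (- (v ! 0)) mod int n + (- (int m + v ! (m+1))) mod int n) mod int n"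
  proof -
    have "sum_list (Tm n m v) = (int m - (\<Sum>i=1..m. v!i)) + (- (v ! 0)) mod int n + (- (int m + v ! (m+1))) mod int n"
      using s s1 by linarith
    then show ?thesis by simp
  qed
  also have "\<dots> = ((int m - (\<Sum>i=1..m. v!i)) + (- (v ! 0)) + (- (int m + v ! (m+1)))) mod int n"
    by (rule modsum_aux)
  also have "\<dots> = (- sum_list v) mod int n"
  proof -
    have "(int m - (\<Sum>i=1..m. v!i)) + (- (v ! 0)) + (- (int m + v ! (m+1))) = - sum_list v"
      using s2 by linarith
    then show ?thesis by simp
  qed
  also have "\<dots> = 0" using V_sum[OF v] by (simp add: zmod_zminus1_eq_if)
  finally have "sum_list (Tm n m v) mod int n = 0" .
  moreover have "\<forall>i\<in>{1..m}. Tm n m v ! i \<in> {0,1}"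
  proof
    fix i assume i: "i \<in> {1..m}"
    then have "v!i=0 \<or> v!i=1" using V_bit[OF v] by auto
    then show "Tm n m v ! i \<in> {0,1}" using i by (auto simp: Tm_nth mod_simps)
  qed
  ultimately show ?thesis using n1 by (simp add: yoke_V_def Tm_nth)
qed

lemma Pk_Pk:
  assumes "length w = m + 2"
  shows "Pk n m a (Pk n m b w) = Pk n m (a + b) w"
  by (rule nth_equalityI) (auto simp: assms Pk_nth mod_simps algebra_simps)

lemma Pk_0:
  assumes "w \<in> yoke_V n m"
  shows "Pk n m 0 w = w"
  using V_len[OF assms] V_b0[OF assms] V_b1[OF assms]
  by (intro nth_equalityI) (auto simp: Pk_nth)

lemma Pk_mod:
  assumes "length w = m + 2"
  shows "Pk n m (k mod int n) w = Pk n m k w"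
  by (rule nth_equalityI) (auto simp: assms Pk_nth mod_simps)

lemma rev_Pk:
  assumes "length w = m + 2"
  shows "rev (Pk n m k w) = Pk n m (- k) (rev w)"
  by (rule nth_equalityI) (auto simp: assms Pk_nth rev_nth' Suc_diff_le)

lemma Tm_Pk:
  assumes "length w = m + 2"
  shows "Tm n m (Pk n m k w) = Pk n m (- k) (Tm n m w)"
  apply (rule nth_equalityI) apply (auto simp: assms Pk_nth Tm_nth mod_simps algebra_simps)
  apply (rule arg_cong[where f="\<lambda>x. x mod int n"], simp)+
  done

lemma Tm_rev:
  assumes "length w = m + 2"
  shows "Tm n m (rev w) = Pk n m (int m) (rev (Tm n m w))"
  apply (rule nth_equalityI) apply (auto simp: assms Pk_nth Tm_nth rev_nth' mod_simps algebra_simps)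
  apply (rule arg_cong[where f="\<lambda>x. x mod int n"], simp)+
  done

lemma Tm_Tm:
  assumes "w \<in> yoke_V n m"
  shows "Tm n m (Tm n m w) = w"
  using V_len[OF assms] V_b0[OF assms] V_b1[OF assms]
  by (intro nth_equalityI) (auto simp: Tm_nth mod_simps)


lemma Wrc_V: "n \<ge> 1 \<Longrightarrow> v \<in> yoke_V n m \<Longrightarrow> Wrc n m r c v \<in> yoke_V n m"
  by (simp add: Wrc_def Tm_V rev_V)

lemma Gf_apply: "v \<in> yoke_V n m \<Longrightarrow> Gf n m k r c v = Pk n m k (Wrc n m r c v)"
  by (simp add: Gf_def)

lemma Gf_V: "n \<ge> 1 \<Longrightarrow> v \<in> yoke_V n m \<Longrightarrow> Gf n m k r c v \<in> yoke_V n m"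
  by (simp add: Gf_apply Wrc_V Pk_V)

lemma modcancel_add: "(((a::int) + k) mod n = (b + k) mod n) = (a mod n = b mod n)"
  using cong_add_rcancel[of a k b n] by (simp add: cong_def)

lemma modcancel_diff: "(((a::int) - k) mod n = (b - k) mod n) = (a mod n = b mod n)"
  using modcancel_add[of a "-k" n b] by simp

lemma modcancel_neg: "((- (a::int)) mod n = (- b) mod n) = (a mod n = b mod n)"
  using cong_minus_minus_iff[of a b n] by (simp add: cong_def)

lemma mod_range_eq: "0 \<le> (a::int) \<Longrightarrow> a < n \<Longrightarrow> 0 \<le> b \<Longrightarrow> b < n \<Longrightarrow> (a mod n = b mod n) = (a = b)"
  by simp

definition ybody :: "nat \<Rightarrow> nat \<Rightarrow> int list \<Rightarrow> int list \<Rightarrow> nat \<Rightarrow> bool" where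
  "ybody n m u v i = ((\<forall>j<m+2. j \<noteq> i \<and> j \<noteq> i + 1 \<longrightarrow> u ! j = v ! j) \<and>
        ((yoke_entry_eq n m i (u ! i) (v ! i + 1) \<and>
          yoke_entry_eq n m (i+1) (u ! (i+1)) (v ! (i+1) - 1)) \<or>
         (yoke_entry_eq n m i (u ! i) (v ! i - 1) \<and>
          yoke_entry_eq n m (i+1) (u ! (i+1)) (v ! (i+1) + 1))))"

lemma adj_body: "yoke_adj n m u v = (u \<in> yoke_V n m \<and> v \<in> yoke_V n m \<and> (\<exists>i\<le>m. ybody n m u v i))"
  by (simp add: yoke_adj_def ybody_def)

lemma Pk_eq_iff:
  assumes u: "u \<in> yoke_V n m" and v: "v \<in> yoke_V n m" and j: "j < m + 2"
  shows "(Pk n m k u ! j = Pk n m k v ! j) = (u ! j = v ! j)"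
proof -
  note l = V_len[OF u] V_len[OF v]
  show ?thesis using j V_b0[OF u] V_b0[OF v] V_b1[OF u] V_b1[OF v]
    by (auto simp: Pk_nth l modcancel_add modcancel_diff)
qed

lemma Pk_ent_iff:
  assumes u: "u \<in> yoke_V n m" and v: "v \<in> yoke_V n m" and j: "j < m + 2"
  shows "yoke_entry_eq n m j (Pk n m k u ! j) (Pk n m k v ! j + d) = yoke_entry_eq n m j (u ! j) (v ! j + d)"
proof -
  note l = V_len[OF u] V_len[OF v]
  have a: "((u!j + k) mod int n = ((v!j + k) mod int n + d) mod int n) = (u!j mod int n = (v!j + d) mod int n)"
    using modcancel_add[of "u!j" k "int n" "v!j + d"] by (simp add: mod_simps algebra_simps)
  have b: "((u!j - k) mod int n = ((v!j - k) mod int n + d) mod int n) = (u!j mod int n = (v!j + d) mod int n)"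
    using modcancel_add[of "u!j" "-k" "int n" "v!j + d"] by (simp add: mod_simps algebra_simps)
  show ?thesis using j a b
    by (auto simp: Pk_nth l yoke_entry_eq_def)
qed

lemma adj_Pk:
  assumes n1: "n \<ge> 1" and u: "u \<in> yoke_V n m" and v: "v \<in> yoke_V n m"
  shows "yoke_adj n m (Pk n m k u) (Pk n m k v) = yoke_adj n m u v"
proof -
  have "ybody n m (Pk n m k u) (Pk n m k v) i = ybody n m u v i" if i: "i \<le> m" for i
  proof -
    have e1: "yoke_entry_eq n m j (Pk n m k u ! j) (Pk n m k v ! j - 1) = yoke_entry_eq n m j (u ! j) (v ! j - 1)"
      if "j < m+2" for j
      using Pk_ent_iff[OF u v that, of k "-1"] by simp
    have e2: "yoke_entry_eq n m j (Pk n m k u ! j) (Pk n m k v ! j + 1) = yoke_entry_eq n m j (u ! j) (v ! j + 1)"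
      if "j < m+2" for j
      using Pk_ent_iff[OF u v that, of k "1"] by simp
    show ?thesis unfolding ybody_def using i e1[of i] e1[of "i+1"] e2[of i] e2[of "i+1"] Pk_eq_iff[OF u v]
      by auto
  qed
  then show ?thesis using Pk_V[OF n1 u] Pk_V[OF n1 v] u v by (auto simp: adj_body)
qed


lemma ent_sym: "j \<le> m + 1 \<Longrightarrow> yoke_entry_eq n m (m + 1 - j) = yoke_entry_eq n m j"
  by (auto simp: yoke_entry_eq_def fun_eq_iff)

lemma ybody_rev:
  assumes lu: "length u = m + 2" and lv: "length v = m + 2" and i: "i \<le> m"
  shows "ybody n m (rev u) (rev v) i = ybody n m u v (m - i)"
proof -
  have A: "(\<forall>j<m+2. j \<noteq> i \<and> j \<noteq> i + 1 \<longrightarrow> rev u ! j = rev v ! j) =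
           (\<forall>j<m+2. j \<noteq> m - i \<and> j \<noteq> m - i + 1 \<longrightarrow> u ! j = v ! j)"
  proof
    assume h: "\<forall>j<m+2. j \<noteq> i \<and> j \<noteq> i + 1 \<longrightarrow> rev u ! j = rev v ! j"
    show "\<forall>j<m+2. j \<noteq> m - i \<and> j \<noteq> m - i + 1 \<longrightarrow> u ! j = v ! j"
    proof (intro allI impI)
      fix j assume j: "j < m + 2" "j \<noteq> m - i \<and> j \<noteq> m - i + 1"
      have "m+1-j < m+2 \<and> m+1-j \<noteq> i \<and> m+1-j \<noteq> i+1" using j i by auto
      then have "rev u ! (m+1-j) = rev v ! (m+1-j)" using h by blast
      then show "u ! j = v ! j" using j lu lv by (simp add: rev_nth')
    qed
  next
    assume h: "\<forall>j<m+2. j \<noteq> m - i \<and> j \<noteq> m - i + 1 \<longrightarrow> u ! j = v ! j"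
    show "\<forall>j<m+2. j \<noteq> i \<and> j \<noteq> i + 1 \<longrightarrow> rev u ! j = rev v ! j"
    proof (intro allI impI)
      fix j assume j: "j < m + 2" "j \<noteq> i \<and> j \<noteq> i + 1"
      have "m+1-j < m+2 \<and> m+1-j \<noteq> m - i \<and> m+1-j \<noteq> m - i + 1" using j i by auto
      then have "u ! (m+1-j) = v ! (m+1-j)" using h by blast
      then show "rev u ! j = rev v ! j" using j lu lv by (simp add: rev_nth')
    qed
  qed
  have B: "rev u ! i = u ! (m - i + 1)" "rev u ! (i+1) = u ! (m - i)"
          "rev v ! i = v ! (m - i + 1)" "rev v ! (i+1) = v ! (m - i)"
    using lu lv i by (simp_all add: rev_nth' Suc_diff_le)
  have C: "yoke_entry_eq n m i = yoke_entry_eq n m (m - i + 1)"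
          "yoke_entry_eq n m (i+1) = yoke_entry_eq n m (m - i)"
    using ent_sym[of i m n] ent_sym[of "i+1" m n] i by (simp_all add: Suc_diff_le)
  show ?thesis unfolding ybody_def A B C by auto
qed

lemma adj_rev:
  assumes u: "u \<in> yoke_V n m" and v: "v \<in> yoke_V n m"
  shows "yoke_adj n m (rev u) (rev v) = yoke_adj n m u v"
proof -
  note l = V_len[OF u] V_len[OF v]
  have "(\<exists>i\<le>m. ybody n m (rev u) (rev v) i) = (\<exists>i\<le>m. ybody n m u v i)"
  proof
    assume "\<exists>i\<le>m. ybody n m (rev u) (rev v) i"
    then obtain i where "i \<le> m" "ybody n m (rev u) (rev v) i" by blast
    then show "\<exists>i\<le>m. ybody n m u v i" using ybody_rev[OF l] by (intro exI[of _ "m - i"]) auto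
  next
    assume "\<exists>i\<le>m. ybody n m u v i"
    then obtain i where i: "i \<le> m" "ybody n m u v i" by blast
    then have "ybody n m (rev u) (rev v) (m - i)" using ybody_rev[OF l, of "m - i"] by simp
    then show "\<exists>i\<le>m. ybody n m (rev u) (rev v) i" by (intro exI[of _ "m - i"]) auto
  qed
  then show ?thesis using rev_V[OF u] rev_V[OF v] u v by (auto simp: adj_body)
qed

lemma Tm_eq_iff:
  assumes u: "u \<in> yoke_V n m" and v: "v \<in> yoke_V n m" and j: "j < m + 2"
  shows "(Tm n m u ! j = Tm n m v ! j) = (u ! j = v ! j)"
proof -
  have a: "((- (int m + u ! (m+1))) mod int n = (- (int m + v ! (m+1))) mod int n) = (u!(m+1) mod int n = v!(m+1) mod int n)"
    using modcancel_neg[of "int m + u ! (m+1)" "int n" "int m + v ! (m+1)"] modcancel_add[of "u!(m+1)" "int m" "int n" "v!(m+1)"]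
    by (simp add: algebra_simps)
  show ?thesis using j V_b0[OF u] V_b0[OF v] V_b1[OF u] V_b1[OF v] a
    by (auto simp: Tm_nth modcancel_neg)
qed

lemma Tm_ent_iff:
  assumes u: "u \<in> yoke_V n m" and v: "v \<in> yoke_V n m" and j: "j < m + 2"
  shows "yoke_entry_eq n m j (Tm n m u ! j) (Tm n m v ! j + d) = yoke_entry_eq n m j (u ! j) (v ! j - d)"
proof -
  have a: "((- (u!j)) mod int n = ((- (v!j)) mod int n + d) mod int n) = (u!j mod int n = (v!j - d) mod int n)"
    using modcancel_neg[of "u!j" "int n" "v!j - d"] by (simp add: mod_simps algebra_simps)
  have b: "((- (int m + u!j)) mod int n = ((- (int m + v!j)) mod int n + d) mod int n) = (u!j mod int n = (v!j - d) mod int n)"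
    using modcancel_neg[of "int m + u!j" "int n" "int m + (v!j - d)"] modcancel_add[of "u!j" "int m" "int n" "v!j - d"]
    by (simp add: mod_simps algebra_simps)
  show ?thesis using j a b
    by (auto simp: Tm_nth yoke_entry_eq_def)
qed

lemma adj_Tm:
  assumes n1: "n \<ge> 1" and u: "u \<in> yoke_V n m" and v: "v \<in> yoke_V n m"
  shows "yoke_adj n m (Tm n m u) (Tm n m v) = yoke_adj n m u v"
proof -
  have "ybody n m (Tm n m u) (Tm n m v) i = ybody n m u v i" if i: "i \<le> m" for i
  proof -
    have e1: "yoke_entry_eq n m j (Tm n m u ! j) (Tm n m v ! j - 1) = yoke_entry_eq n m j (u ! j) (v ! j + 1)"
      if "j < m+2" for j
      using Tm_ent_iff[OF u v that, of "-1"] by simp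
    have e2: "yoke_entry_eq n m j (Tm n m u ! j) (Tm n m v ! j + 1) = yoke_entry_eq n m j (u ! j) (v ! j - 1)"
      if "j < m+2" for j
      using Tm_ent_iff[OF u v that, of "1"] by simp
    show ?thesis unfolding ybody_def using i e1[of i] e1[of "i+1"] e2[of i] e2[of "i+1"] Tm_eq_iff[OF u v]
      by auto
  qed
  then show ?thesis using Tm_V[OF n1 u] Tm_V[OF n1 v] u v by (auto simp: adj_body)
qed


lemma Wrc_len: "v \<in> yoke_V n m \<Longrightarrow> length (Wrc n m r c v) = m + 2"
  by (simp add: Wrc_def V_len)

lemma Wrc_FF[simp]: "Wrc n m False False v = v"
  by (simp add: Wrc_def)

lemma adj_Wrc:
  assumes n1: "n \<ge> 1" and u: "u \<in> yoke_V n m" and v: "v \<in> yoke_V n m"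
  shows "yoke_adj n m (Wrc n m r c u) (Wrc n m r c v) = yoke_adj n m u v"
  using adj_Tm[OF n1 u v] adj_rev[OF u v] adj_rev[OF Tm_V[OF n1 u] Tm_V[OF n1 v]]
  by (simp add: Wrc_def)

lemma adj_Gf:
  assumes n1: "n \<ge> 1" and u: "u \<in> yoke_V n m" and v: "v \<in> yoke_V n m"
  shows "yoke_adj n m (Gf n m k r c u) (Gf n m k r c v) = yoke_adj n m u v"
  using adj_Pk[OF n1 Wrc_V[OF n1 u] Wrc_V[OF n1 v]] adj_Wrc[OF n1 u v]
  by (simp add: Gf_apply u v)

lemma Wrc_inv:
  assumes n1: "n \<ge> 1" and v: "v \<in> yoke_V n m"
  shows "(if c then Tm n m else id) ((if r then rev else id) (Wrc n m r c v)) = v"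
  using Tm_Tm[OF v] by (simp add: Wrc_def)

lemma Wrc_inv2:
  assumes n1: "n \<ge> 1" and v: "v \<in> yoke_V n m"
  shows "Wrc n m r c ((if c then Tm n m else id) ((if r then rev else id) v)) = v"
proof -
  have "(if r then rev else id) v \<in> yoke_V n m" using rev_V[OF v] v by simp
  then show ?thesis using Tm_Tm[OF v] Tm_Tm[OF rev_V[OF v]] by (cases r; cases c) (simp_all add: Wrc_def)
qed

lemma Gf_bij:
  assumes n1: "n \<ge> 1"
  shows "bij_betw (Gf n m k r c) (yoke_V n m) (yoke_V n m)"
proof (rule bij_betw_byWitness[where f' = "\<lambda>y. (if c then Tm n m else id) ((if r then rev else id) (Pk n m (-k) y))"])
  show "\<forall>a\<in>yoke_V n m. (if c then Tm n m else id) ((if r then rev else id) (Pk n m (-k) (Gf n m k r c a))) = a"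
  proof
    fix a assume a: "a \<in> yoke_V n m"
    have "Pk n m (-k) (Gf n m k r c a) = Wrc n m r c a"
      using a Pk_Pk[OF Wrc_len[OF a], of n "-k" k] Pk_0[OF Wrc_V[OF n1 a]] by (simp add: Gf_apply)
    then show "(if c then Tm n m else id) ((if r then rev else id) (Pk n m (-k) (Gf n m k r c a))) = a"
      using Wrc_inv[OF n1 a] by simp
  qed
  show "\<forall>a\<in>yoke_V n m. Gf n m k r c ((if c then Tm n m else id) ((if r then rev else id) (Pk n m (-k) a))) = a"
  proof
    fix a assume a: "a \<in> yoke_V n m"
    have pa: "Pk n m (-k) a \<in> yoke_V n m" using Pk_V[OF n1 a] .
    have w: "(if c then Tm n m else id) ((if r then rev else id) (Pk n m (-k) a)) \<in> yoke_V n m"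
      using pa rev_V Tm_V[OF n1] by auto
    show "Gf n m k r c ((if c then Tm n m else id) ((if r then rev else id) (Pk n m (-k) a))) = a"
      using w Wrc_inv2[OF n1 pa] Pk_Pk[OF V_len[OF a], of n k "-k"] Pk_0[OF a] by (simp add: Gf_apply)
  qed
  show "Gf n m k r c ` yoke_V n m \<subseteq> yoke_V n m" using Gf_V[OF n1] by auto
  show "(\<lambda>y. (if c then Tm n m else id) ((if r then rev else id) (Pk n m (-k) y))) ` yoke_V n m \<subseteq> yoke_V n m"
    using Pk_V[OF n1] rev_V Tm_V[OF n1] by auto
qed

lemma Gf_Bij: "n \<ge> 1 \<Longrightarrow> Gf n m k r c \<in> Bij (yoke_V n m)"
  using Gf_bij by (simp add: Bij_def Gf_def)

lemma Gf_aut: "n \<ge> 1 \<Longrightarrow> Gf n m k r c \<in> yoke_aut n m"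
  using Gf_Bij adj_Gf by (simp add: yoke_aut_def)


lemma BG_mult: "x \<in> Bij S \<Longrightarrow> y \<in> Bij S \<Longrightarrow> x \<otimes>\<^bsub>BijGroup S\<^esub> y = compose S x y"
  by (simp add: BijGroup_def)

lemma BG_one: "\<one>\<^bsub>BijGroup S\<^esub> = (\<lambda>x\<in>S. x)"
  by (simp add: BijGroup_def)

lemma BG_carrier: "carrier (BijGroup S) = Bij S"
  by (simp add: BijGroup_def)

lemma aut_subgroup: "subgroup (yoke_aut n m) (BijGroup (yoke_V n m))"
proof (rule group.subgroupI[OF group_BijGroup])
  show "yoke_aut n m \<subseteq> carrier (BijGroup (yoke_V n m))"
    by (auto simp: yoke_aut_def BG_carrier)
  show "yoke_aut n m \<noteq> {}"
    using id_Bij[of "yoke_V n m"] by (auto simp: yoke_aut_def)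
next
  fix a assume a: "a \<in> yoke_aut n m"
  then have aB: "a \<in> Bij (yoke_V n m)" by (simp add: yoke_aut_def)
  have inv: "inv\<^bsub>BijGroup (yoke_V n m)\<^esub> a = (\<lambda>x \<in> yoke_V n m. (inv_into (yoke_V n m) a) x)"
    using inv_BijGroup[OF aB] .
  have bb: "bij_betw a (yoke_V n m) (yoke_V n m)" using aB by (simp add: Bij_def)
  have "yoke_adj n m (inv_into (yoke_V n m) a u) (inv_into (yoke_V n m) a v) = yoke_adj n m u v"
    if u: "u \<in> yoke_V n m" and v: "v \<in> yoke_V n m" for u v
  proof -
    have iu: "inv_into (yoke_V n m) a u \<in> yoke_V n m" and iv: "inv_into (yoke_V n m) a v \<in> yoke_V n m"
      using Bij_inv_into_mem[OF aB] u v by auto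
    have e: "a (inv_into (yoke_V n m) a u) = u" "a (inv_into (yoke_V n m) a v) = v"
      using bb u v by (simp_all add: bij_betw_inv_into_right)
    have "yoke_adj n m (a (inv_into (yoke_V n m) a u)) (a (inv_into (yoke_V n m) a v))
       = yoke_adj n m (inv_into (yoke_V n m) a u) (inv_into (yoke_V n m) a v)"
      using a iu iv by (simp add: yoke_aut_def)
    then show ?thesis using e by simp
  qed
  then show "inv\<^bsub>BijGroup (yoke_V n m)\<^esub> a \<in> yoke_aut n m"
    using restrict_inv_into_Bij[OF aB] Bij_inv_into_mem[OF aB] by (simp add: inv yoke_aut_def)
next
  fix a b assume a: "a \<in> yoke_aut n m" and b: "b \<in> yoke_aut n m"
  then have aB: "a \<in> Bij (yoke_V n m)" and bB: "b \<in> Bij (yoke_V n m)" by (simp_all add: yoke_aut_def)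
  have "yoke_adj n m (a (b u)) (a (b v)) = yoke_adj n m u v"
    if u: "u \<in> yoke_V n m" and v: "v \<in> yoke_V n m" for u v
  proof -
    have "b u \<in> yoke_V n m" "b v \<in> yoke_V n m" using Bij_imp_funcset[OF bB] u v by auto
    then show ?thesis using a b u v by (auto simp: yoke_aut_def)
  qed
  then show "a \<otimes>\<^bsub>BijGroup (yoke_V n m)\<^esub> b \<in> yoke_aut n m"
    using compose_Bij[OF aB bB] by (simp add: BG_mult[OF aB bB] yoke_aut_def compose_def)
qed

lemma phi_Gf: "yoke_phi n m = Gf n m 1 False False"
  by (simp add: yoke_phi_def Gf_def Pk_def)

lemma psi_Gf: "n \<ge> 1 \<Longrightarrow> yoke_psi n m = Gf n m 0 True False"
  by (rule ext) (simp add: yoke_psi_def Gf_def Wrc_def Pk_0 rev_V)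

lemma tau_Gf: "n \<ge> 1 \<Longrightarrow> yoke_tau n m = Gf n m 0 False True"
proof -
  assume n1: "n \<ge> 1"
  have e: "yoke_tau n m = (\<lambda>v\<in>yoke_V n m. Tm n m v)"
    unfolding yoke_tau_def Tm_def by (rule refl)
  show ?thesis unfolding e
    by (rule ext) (simp add: Gf_def Wrc_def Pk_0 Tm_V[OF n1])
qed

lemma one_Gf: "n \<ge> 1 \<Longrightarrow> \<one>\<^bsub>BijGroup (yoke_V n m)\<^esub> = Gf n m 0 False False"
  by (rule ext) (simp add: BG_one Gf_def Pk_0)

lemma Gf_mod: "Gf n m (k mod int n) r c = Gf n m k r c"
  by (rule ext) (simp add: Gf_def Pk_mod Wrc_len)

lemma Gf_mult:
  assumes n1: "n \<ge> 1"
    and h: "\<And>v. v \<in> yoke_V n m \<Longrightarrow> Gf n m a r1 c1 (Gf n m k r c v) = Gf n m k2 r2 c2 v"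
  shows "Gf n m a r1 c1 \<otimes>\<^bsub>BijGroup (yoke_V n m)\<^esub> Gf n m k r c = Gf n m k2 r2 c2"
proof -
  have "Gf n m a r1 c1 \<otimes>\<^bsub>BijGroup (yoke_V n m)\<^esub> Gf n m k r c = compose (yoke_V n m) (Gf n m a r1 c1) (Gf n m k r c)"
    using BG_mult[OF Gf_Bij[OF n1] Gf_Bij[OF n1]] .
  also have "\<dots> = Gf n m k2 r2 c2"
  proof (rule ext)
    fix v show "compose (yoke_V n m) (Gf n m a r1 c1) (Gf n m k r c) v = Gf n m k2 r2 c2 v"
      by (cases "v \<in> yoke_V n m") (simp_all add: compose_def h, simp add: Gf_def)
  qed
  finally show ?thesis .
qed

lemma M1:
  assumes n1: "n \<ge> 1"
  shows "Gf n m a False False \<otimes>\<^bsub>BijGroup (yoke_V n m)\<^esub> Gf n m k r c = Gf n m (a + k) r c"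
proof (rule Gf_mult[OF n1])
  fix v assume v: "v \<in> yoke_V n m"
  show "Gf n m a False False (Gf n m k r c v) = Gf n m (a + k) r c v"
    using Gf_V[OF n1 v] Pk_Pk[OF Wrc_len[OF v]] by (simp add: Gf_apply v)
qed

lemma M2:
  assumes n1: "n \<ge> 1"
  shows "Gf n m 0 True False \<otimes>\<^bsub>BijGroup (yoke_V n m)\<^esub> Gf n m k r c = Gf n m (- k) (\<not> r) c"
proof (rule Gf_mult[OF n1])
  fix v assume v: "v \<in> yoke_V n m"
  have g: "Gf n m k r c v \<in> yoke_V n m" using Gf_V[OF n1 v] .
  have "Gf n m 0 True False (Gf n m k r c v) = rev (Gf n m k r c v)"
    using g Pk_0[OF rev_V[OF g]] by (simp add: Gf_apply Wrc_def)
  also have "\<dots> = Pk n m (-k) (rev (Wrc n m r c v))"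
    using rev_Pk[OF Wrc_len[OF v]] by (simp add: Gf_apply v)
  also have "\<dots> = Gf n m (- k) (\<not> r) c v"
    by (simp add: Gf_apply v Wrc_def)
  finally show "Gf n m 0 True False (Gf n m k r c v) = Gf n m (- k) (\<not> r) c v" .
qed

lemma M3:
  assumes n1: "n \<ge> 1"
  shows "Gf n m 0 False True \<otimes>\<^bsub>BijGroup (yoke_V n m)\<^esub> Gf n m k r c
      = Gf n m (if r then int m - k else - k) r (\<not> c)"
proof (rule Gf_mult[OF n1])
  fix v assume v: "v \<in> yoke_V n m"
  have g: "Gf n m k r c v \<in> yoke_V n m" using Gf_V[OF n1 v] .
  have "Gf n m 0 False True (Gf n m k r c v) = Tm n m (Gf n m k r c v)"
    using g Pk_0[OF Tm_V[OF n1 g]] by (simp add: Gf_apply Wrc_def)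
  also have "\<dots> = Pk n m (-k) (Tm n m (Wrc n m r c v))"
    using Tm_Pk[OF Wrc_len[OF v]] by (simp add: Gf_apply v)
  also have "\<dots> = Gf n m (if r then int m - k else - k) r (\<not> c) v"
  proof (cases r)
    case True
    have l: "length ((if c then Tm n m else id) v) = m + 2" using V_len[OF v] by simp
    have "Tm n m (Wrc n m r c v) = Pk n m (int m) (rev (Tm n m ((if c then Tm n m else id) v)))"
      using True Tm_rev[OF l] by (simp add: Wrc_def)
    then show ?thesis using True Pk_Pk[of "rev (Tm n m ((if c then Tm n m else id) v))" m n "-k" "int m"] Tm_Tm[OF v]
      by (simp add: Gf_apply v Wrc_def)
  next
    case False
    then show ?thesis using Tm_Tm[OF v] by (simp add: Gf_apply v Wrc_def)
  qed
  finally show "Gf n m 0 False True (Gf n m k r c v) = Gf n m (if r then int m - k else - k) r (\<not> c) v" .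
qed


definition Sset :: "nat \<Rightarrow> nat \<Rightarrow> (int list \<Rightarrow> int list) set" where
  "Sset n m = {Gf n m k r c | k r c. 0 \<le> k \<and> k < int n}"

lemma Gf_in_S: "n \<ge> 1 \<Longrightarrow> Gf n m k r c \<in> Sset n m"
  unfolding Sset_def
  by (rule CollectI, rule exI[of _ "k mod int n"], rule exI[of _ r], rule exI[of _ c]) (simp add: Gf_mod)

abbreviation "BG n m \<equiv> BijGroup (yoke_V n m)"
abbreviation "Hgen n m \<equiv> {yoke_phi n m, yoke_psi n m, yoke_tau n m}"

lemma H_aut: "n \<ge> 1 \<Longrightarrow> Hgen n m \<subseteq> yoke_aut n m"
  using Gf_aut by (simp add: phi_Gf psi_Gf tau_Gf)

lemma H_carr: "n \<ge> 1 \<Longrightarrow> Hgen n m \<subseteq> carrier (BG n m)"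
  using Gf_Bij by (simp add: phi_Gf psi_Gf tau_Gf BG_carrier)

lemma gen_eq: "n \<ge> 1 \<Longrightarrow> A_yoke n m = generate (BG n m) (Hgen n m)"
  unfolding A_yoke_def AutYoke_def
  by (rule group.generate_consistent[OF group_BijGroup H_aut aut_subgroup])

lemma left_closed:
  assumes n1: "n \<ge> 1" and x: "x \<in> generate (BG n m) (Hgen n m)"
  shows "\<forall>s\<in>Sset n m. x \<otimes>\<^bsub>BG n m\<^esub> s \<in> Sset n m"
  using x
proof (induction rule: generate.induct)
  case one
  show ?case
  proof
    fix s assume "s \<in> Sset n m"
    then obtain k r c where "s = Gf n m k r c" by (auto simp: Sset_def)
    then show "\<one>\<^bsub>BG n m\<^esub> \<otimes>\<^bsub>BG n m\<^esub> s \<in> Sset n m"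
      using M1[OF n1, of m 0 k r c] Gf_in_S[OF n1] by (simp add: one_Gf[OF n1])
  qed
next
  case (incl h)
  show ?case
  proof
    fix s assume "s \<in> Sset n m"
    then obtain k r c where s: "s = Gf n m k r c" by (auto simp: Sset_def)
    show "h \<otimes>\<^bsub>BG n m\<^esub> s \<in> Sset n m"
      using incl s M1[OF n1] M2[OF n1] M3[OF n1] Gf_in_S[OF n1]
      by (auto simp: phi_Gf psi_Gf[OF n1] tau_Gf[OF n1])
  qed
next
  case (inv h)
  have i1: "inv\<^bsub>BG n m\<^esub> (Gf n m 1 False False) = Gf n m (-1) False False"
    by (rule group.inv_equality[OF group_BijGroup]) (simp_all add: M1[OF n1] one_Gf[OF n1] Gf_Bij[OF n1] BG_carrier)
  have i2: "inv\<^bsub>BG n m\<^esub> (Gf n m 0 True False) = Gf n m 0 True False"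
    by (rule group.inv_equality[OF group_BijGroup]) (simp_all add: M2[OF n1] one_Gf[OF n1] Gf_Bij[OF n1] BG_carrier)
  have i3: "inv\<^bsub>BG n m\<^esub> (Gf n m 0 False True) = Gf n m 0 False True"
    by (rule group.inv_equality[OF group_BijGroup]) (simp_all add: M3[OF n1] one_Gf[OF n1] Gf_Bij[OF n1] BG_carrier)
  show ?case
  proof
    fix s assume "s \<in> Sset n m"
    then obtain k r c where s: "s = Gf n m k r c" by (auto simp: Sset_def)
    show "inv\<^bsub>BG n m\<^esub> h \<otimes>\<^bsub>BG n m\<^esub> s \<in> Sset n m"
      using inv s M1[OF n1] M2[OF n1] M3[OF n1] Gf_in_S[OF n1] i1 i2 i3
      by (auto simp: phi_Gf psi_Gf[OF n1] tau_Gf[OF n1])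
  qed
next
  case (eng h1 h2)
  have c1: "h1 \<in> carrier (BG n m)" and c2: "h2 \<in> carrier (BG n m)"
    using group.generate_in_carrier[OF group_BijGroup H_carr[OF n1]] eng.hyps by auto
  show ?case
  proof
    fix s assume sS: "s \<in> Sset n m"
    then have cs: "s \<in> carrier (BG n m)" using Gf_Bij[OF n1] by (auto simp: Sset_def BG_carrier)
    have "h1 \<otimes>\<^bsub>BG n m\<^esub> h2 \<otimes>\<^bsub>BG n m\<^esub> s = h1 \<otimes>\<^bsub>BG n m\<^esub> (h2 \<otimes>\<^bsub>BG n m\<^esub> s)"
      by (rule monoid.m_assoc[OF group.is_monoid[OF group_BijGroup] c1 c2 cs])
    then show "h1 \<otimes>\<^bsub>BG n m\<^esub> h2 \<otimes>\<^bsub>BG n m\<^esub> s \<in> Sset n m"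
      using eng.IH sS by auto
  qed
qed

lemma S_in_gen:
  assumes n1: "n \<ge> 1"
  shows "Gf n m (int k) r c \<in> generate (BG n m) (Hgen n m)"
proof (induction k)
  case 0
  have a: "Gf n m 0 False False \<in> generate (BG n m) (Hgen n m)"
    using generate.one[of "BG n m" "Hgen n m"] by (simp add: one_Gf[OF n1])
  have b: "Gf n m 0 True False \<in> generate (BG n m) (Hgen n m)"
    using generate.incl[of "yoke_psi n m" "Hgen n m" "BG n m"] by (simp add: psi_Gf[OF n1])
  have c: "Gf n m 0 False True \<in> generate (BG n m) (Hgen n m)"
    using generate.incl[of "yoke_tau n m" "Hgen n m" "BG n m"] by (simp add: tau_Gf[OF n1])
  have d: "Gf n m 0 True True \<in> generate (BG n m) (Hgen n m)"
    using generate.eng[OF b c] M2[OF n1, of m 0 False True] by simp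
  show ?case using a b c d by (cases r; cases c) auto
next
  case (Suc k)
  have p: "Gf n m 1 False False \<in> generate (BG n m) (Hgen n m)"
    using generate.incl[of "yoke_phi n m" "Hgen n m" "BG n m"] by (simp add: phi_Gf)
  show ?case using generate.eng[OF p Suc.IH] M1[OF n1, of m 1 "int k" r c] by (simp add: add.commute)
qed

lemma A_eq_S:
  assumes n1: "n \<ge> 1"
  shows "A_yoke n m = Sset n m"
proof
  show "A_yoke n m \<subseteq> Sset n m"
  proof
    fix x assume "x \<in> A_yoke n m"
    then have x: "x \<in> generate (BG n m) (Hgen n m)" using gen_eq[OF n1] by simp
    have cx: "x \<in> carrier (BG n m)"
      using group.generate_in_carrier[OF group_BijGroup H_carr[OF n1] x] .
    have "x \<otimes>\<^bsub>BG n m\<^esub> Gf n m 0 False False \<in> Sset n m"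
      using left_closed[OF n1 x] Gf_in_S[OF n1] by auto
    moreover have "x \<otimes>\<^bsub>BG n m\<^esub> Gf n m 0 False False = x"
      using monoid.r_one[OF group.is_monoid[OF group_BijGroup] cx] by (simp add: one_Gf[OF n1])
    ultimately show "x \<in> Sset n m" by simp
  qed
  show "Sset n m \<subseteq> A_yoke n m"
  proof
    fix x assume "x \<in> Sset n m"
    then obtain k r c where x: "x = Gf n m k r c" and k: "0 \<le> k" by (auto simp: Sset_def)
    have "Gf n m (int (nat k)) r c \<in> generate (BG n m) (Hgen n m)" by (rule S_in_gen[OF n1])
    then show "x \<in> A_yoke n m" using x k gen_eq[OF n1] by simp
  qed
qed


definition zv :: "nat \<Rightarrow> int list" where "zv m = replicate (m+2) 0"
definition ev :: "nat \<Rightarrow> nat \<Rightarrow> int list" where "ev n m = (replicate (m+2) 0)[1 := 1, m+1 := int n - 1]"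

lemma zv_V: "n \<ge> 1 \<Longrightarrow> zv m \<in> yoke_V n m"
  by (simp add: zv_def yoke_V_def nth_replicate sum_list_replicate del: replicate.simps replicate_Suc)

lemma ev_nth: "i < m + 2 \<Longrightarrow> m \<ge> 1 \<Longrightarrow> ev n m ! i = (if i = m + 1 then int n - 1 else if i = 1 then 1 else 0)"
  by (simp add: ev_def nth_list_update del: replicate.simps replicate_Suc)

lemma ev_len[simp]: "length (ev n m) = m + 2"
  by (simp add: ev_def del: replicate.simps replicate_Suc)

lemma minus1_mod: "n \<ge> 1 \<Longrightarrow> (-1::int) mod int n = int n - 1"
proof (cases "n = 1")
  case False
  assume "n \<ge> 1"
  then have "n \<ge> 2" using False by simp
  then show ?thesis by (simp add: zmod_zminus1_eq_if)
qed simp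

lemma ev_V:
  assumes n1: "n \<ge> 1" and m1: "m \<ge> 1"
  shows "ev n m \<in> yoke_V n m"
proof -
  have l: "length (ev n m) = m + 2" by (simp add: ev_def del: replicate.simps replicate_Suc)
  have "(\<Sum>i=1..m. ev n m ! i) = (\<Sum>i=1..m. if i = 1 then 1 else 0)"
    by (rule sum.cong) (auto simp: ev_nth m1)
  also have "\<dots> = 1" using m1 by (simp add: sum.delta)
  finally have "sum_list (ev n m) = int n"
    using sum_list_ends[OF l] m1 by (simp add: ev_nth)
  then show ?thesis using l n1 m1 by (auto simp: yoke_V_def ev_nth)
qed

lemma Gf_nth0: "x \<in> yoke_V n m \<Longrightarrow> Gf n m k r c x ! 0 = (Wrc n m r c x ! 0 + k) mod int n"
  by (simp add: Gf_apply Pk_nth Wrc_len)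

lemma Gf_nth1: "m \<ge> 1 \<Longrightarrow> x \<in> yoke_V n m \<Longrightarrow> Gf n m k r c x ! 1 = Wrc n m r c x ! 1"
  by (simp add: Gf_apply Pk_nth Wrc_len)

lemma Wrc_z1: "m \<ge> 1 \<Longrightarrow> Wrc n m r c (zv m) ! 1 = (if c then 1 else 0)"
  by (simp add: Wrc_def zv_def Tm_nth rev_nth del: replicate.simps replicate_Suc)

lemma Wrc_e1: "m \<ge> 2 \<Longrightarrow> Wrc n m r c (ev n m) ! 1 = (if r = c then 1 else 0)"
  by (simp add: Wrc_def Tm_nth rev_nth' ev_nth)

lemma Wrc_z0_1: "n \<ge> 1 \<Longrightarrow> Wrc n 1 r c (zv 1) ! 0 = (if r \<and> c then int n - 1 else 0)"
  by (simp add: Wrc_def zv_def Tm_nth rev_nth minus1_mod)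

lemma Wrc_e0_1: "n \<ge> 1 \<Longrightarrow> Wrc n 1 r c (ev n 1) ! 0 = (if r \<and> \<not> c then int n - 1 else 0)"
  by (simp add: Wrc_def ev_def Tm_nth rev_nth)


lemma shift_ne: "n \<ge> 2 \<Longrightarrow> 0 \<le> k \<Longrightarrow> k < int n \<Longrightarrow> (int n - 1 + k) mod int n \<noteq> k"
proof
  assume n2: "n \<ge> 2" and k: "0 \<le> k" "k < int n" and h: "(int n - 1 + k) mod int n = k"
  then have "(int n - 1 + k) mod int n = (0 + k) mod int n" by simp
  then have "(int n - 1) mod int n = 0 mod int n" using modcancel_add[of "int n - 1" k "int n" 0] by simp
  then show False using n2 minus1_mod[of n] by simp
qed

lemma Gf_inj:
  assumes n1: "n \<ge> 1" and m0: "m > 0" and nm: "(n, m) \<noteq> (1, 1)"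
    and k: "0 \<le> k" "k < int n" and k': "0 \<le> k'" "k' < int n"
    and eq: "Gf n m k r c = Gf n m k' r' c'"
  shows "k = k' \<and> r = r' \<and> c = c'"
proof -
  have m1: "m \<ge> 1" using m0 by simp
  have E: "Gf n m k r c x = Gf n m k' r' c' x" for x using eq by simp
  have zV: "zv m \<in> yoke_V n m" using zv_V[OF n1] .
  have eV: "ev n m \<in> yoke_V n m" using ev_V[OF n1 m1] .
  have cc: "c = c'"
    using E[of "zv m"] arg_cong[where f="\<lambda>l. l ! 1"]
    using Gf_nth1[OF m1 zV, of k r c] Gf_nth1[OF m1 zV, of k' r' c'] Wrc_z1[OF m1]
    by (auto split: if_splits)
  have rr: "r = r'"
  proof (cases "m \<ge> 2")
    case True
    have "Gf n m k r c (ev n m) ! 1 = Gf n m k' r' c' (ev n m) ! 1" using E by simp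
    then show ?thesis using Gf_nth1[OF m1 eV] Wrc_e1[OF True] cc by (auto split: if_splits)
  next
    case False
    then have m11: "m = 1" using m1 by simp
    then have n2: "n \<ge> 2" using nm n1 by auto
    have z0: "(Wrc n 1 r c (zv 1) ! 0 + k) mod int n = (Wrc n 1 r' c' (zv 1) ! 0 + k') mod int n"
      using E[of "zv m"] Gf_nth0[OF zV] m11 by metis
    have e0: "(Wrc n 1 r c (ev n 1) ! 0 + k) mod int n = (Wrc n 1 r' c' (ev n 1) ! 0 + k') mod int n"
      using E[of "ev n m"] Gf_nth0[OF eV] m11 by metis
    show ?thesis
    proof (rule ccontr)
      assume "r \<noteq> r'"
      then show False
        using z0 e0 Wrc_z0_1[OF n1] Wrc_e0_1[OF n1] cc k k' shift_ne[OF n2 k] shift_ne[OF n2 k']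
        by (cases r; cases c) (auto simp: add.commute)
    qed
  qed
  have "(Wrc n m r c (zv m) ! 0 + k) mod int n = (Wrc n m r c (zv m) ! 0 + k') mod int n"
  proof -
    have "Gf n m k r c (zv m) ! 0 = Gf n m k' r' c' (zv m) ! 0" using E by simp
    then show ?thesis using Gf_nth0[OF zV] rr cc by simp
  qed
  then have "(k + Wrc n m r c (zv m) ! 0) mod int n = (k' + Wrc n m r c (zv m) ! 0) mod int n"
    by (simp add: add.commute)
  then have "k mod int n = k' mod int n" using modcancel_add by blast
  then have "k = k'" using k k' by simp
  then show ?thesis using rr cc by simp
qed

lemma card_S:
  assumes n1: "n \<ge> 1" and m0: "m > 0" and nm: "(n, m) \<noteq> (1, 1)"
  shows "card (Sset n m) = 4 * n"
proof -
  have S: "Sset n m = (\<lambda>(k, r, c). Gf n m k r c) ` ({0..<int n} \<times> (UNIV :: bool set) \<times> (UNIV :: bool set))"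
  proof
    show "Sset n m \<subseteq> (\<lambda>(k, r, c). Gf n m k r c) ` ({0..<int n} \<times> (UNIV :: bool set) \<times> (UNIV :: bool set))"
    proof
      fix x assume "x \<in> Sset n m"
      then obtain k r c where "x = Gf n m k r c" "0 \<le> k" "k < int n" by (auto simp: Sset_def)
      then show "x \<in> (\<lambda>(k, r, c). Gf n m k r c) ` ({0..<int n} \<times> (UNIV :: bool set) \<times> (UNIV :: bool set))"
        by (intro image_eqI[of _ _ "(k, r, c)"]) auto
    qed
  qed (force simp: Sset_def)
  have inj: "inj_on (\<lambda>(k, r, c). Gf n m k r c) ({0..<int n} \<times> (UNIV :: bool set) \<times> (UNIV :: bool set))"
  proof (rule inj_onI)
    fix x y assume x: "x \<in> {0..<int n} \<times> (UNIV :: bool set) \<times> (UNIV :: bool set)"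
      and y: "y \<in> {0..<int n} \<times> (UNIV :: bool set) \<times> (UNIV :: bool set)"
      and e: "(\<lambda>(k, r, c). Gf n m k r c) x = (\<lambda>(k, r, c). Gf n m k r c) y"
    obtain k r c where xx: "x = (k, r, c)" by (cases x) auto
    obtain k' r' c' where yy: "y = (k', r', c')" by (cases y) auto
    have "k = k' \<and> r = r' \<and> c = c'"
      using x y e Gf_inj[OF n1 m0 nm, of k k' r c r' c'] by (simp add: xx yy)
    then show "x = y" by (simp add: xx yy)
  qed
  have "card (Sset n m) = card ({0..<int n} \<times> (UNIV :: bool set) \<times> (UNIV :: bool set))"
    unfolding S by (rule card_image[OF inj])
  also have "\<dots> = n * card ((UNIV :: bool set) \<times> (UNIV :: bool set))"
    by (simp only: card_cartesian_product) simp
  also have "card ((UNIV :: bool set) \<times> (UNIV :: bool set)) = 2 * 2"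
    by (simp only: card_cartesian_product) simp
  finally show ?thesis by simp
qed

theorem lemma6p11:
  fixes n m :: nat
  assumes "n \<ge> 1" and "m > 0" and "(n, m) \<noteq> (1, 1)"
  shows "card (A_yoke n m) = 4 * n"
  using A_eq_S[OF assms(1)] card_S[OF assms] by simp

end
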